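(* Let $\mathit{VI}$ be a finite set of variables with $\#\mathit{VI}=n$, let $sh_1,sh_2\in\mathit{SH}$ and $1\le k\le n$. If $\rho_{\mathit{TSD}_k}(sh_1)=\rho_{\mathit{TSD}_k}(sh_2)$ then, for each $\sigma\in\mathit{Subst}$, each $sh'\in\mathit{SH}$ and each $V\in\wp(\mathit{VI})$: $\rho_{\mathit{TSD}_k}(\mathrm{amgu}(sh_1,\sigma))=\rho_{\mathit{TSD}_k}(\mathrm{amgu}(sh_2,\sigma))$, $\rho_{\mathit{TSD}_k}(sh'\cup sh_1)=\rho_{\mathit{TSD}_k}(sh'\cup sh_2)$, and $\rho_{\mathit{TSD}_k}(\mathrm{proj}(sh_1,V))=\rho_{\mathit{TSD}_k}(\mathrm{proj}(sh_2,V))$.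
   Context: $\mathit{SG}=\wp(\mathit{VI})\setminus\{\emptyset\}$ and $\mathit{SH}=\wp(\mathit{SG})$. $\rho_{\mathit{TSD}_k}(sh)=\{\,S\in\mathit{SG}\mid \forall T\subseteq S:\ \#T<k\implies S=\bigcup\{U\in sh\mid T\subseteq U\subseteq S\}\,\}$. Terms are first-order terms over variables; $\mathrm{vars}(t)$ is the set of variables of $t$. A binding is $x\mapsto t$ with $x$ a variable and $t\ne x$ a term; $\mathit{Subst}$ is the set of idempotent substitutions (finite sets of bindings), here with all variables in $\mathit{VI}$. Operations on $\mathit{SH}$: $\mathrm{bin}(sh_1,sh_2)=\{S_1\cup S_2\mid S_1\in sh_1,S_2\in sh_2\}$; $sh^\star=\{S\in\mathit{SG}\mid\exists sh'\subseteq sh: S=\bigcup sh'\}$; $\mathrm{rel}(V,sh)=\{S\in sh\mid S\cap V\ne\emptyset\}$; for a binding $x\mapsto t$ with $v_x=\{x\}$, $v_t=\mathrm{vars}(t)$, $v_{xt}=v_x\cup v_t$: $\mathrm{amgu}(sh,x\mapsto t)=(sh\setminus\mathrm{rel}(v_{xt},sh))\cup\mathrm{bin}(\mathrm{rel}(v_x,sh)^\star,\mathrm{rel}(v_t,sh)^\star)$; extended to substitutions by $\mathrm{amgu}(sh,\emptyset)=sh$ and $\mathrm{amgu}(sh,\{x\mapsto t\}\cup\sigma)=\mathrm{amgu}(\mathrm{amgu}(sh,x\mapsto t),\sigma\setminus\{x\mapsto t\})$. Projection: $\mathrm{proj}(sh,V)=\{S\cap V\mid S\in sh, S\cap V\ne\emptyset\}\cup\{\{x\}\mid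 x\in\mathit{VI}\setminus V\}$. *)

theory Defs
  imports Main
begin

datatype ('f, 'v) trm = Var 'v | Fun 'f "('f, 'v) trm list"

fun vars :: "('f, 'v) trm \<Rightarrow> 'v set" where
  "vars (Var x) = {x}"
| "vars (Fun f ts) = (\<Union>t \<in> set ts. vars t)"

definition SG :: "'v set \<Rightarrow> 'v set set" where
  "SG VI = Pow VI - {{}}"

definition SH :: "'v set \<Rightarrow> 'v set set set" where
  "SH VI = Pow (SG VI)"

definition rho_TSD :: "'v set \<Rightarrow> nat \<Rightarrow> 'v set set \<Rightarrow> 'v set set" where
  "rho_TSD VI k sh = {S \<in> SG VI. \<forall>T. T \<subseteq> S \<longrightarrow> card T < k \<longrightarrow>
                                   S = \<Union>{U \<in> sh. T \<subseteq> U \<and> U \<subseteq> S}}"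

definition bin :: "'v set set \<Rightarrow> 'v set set \<Rightarrow> 'v set set" where
  "bin sh1 sh2 = {S1 \<union> S2 | S1 S2. S1 \<in> sh1 \<and> S2 \<in> sh2}"

definition star :: "'v set \<Rightarrow> 'v set set \<Rightarrow> 'v set set" where
  "star VI sh = {S \<in> SG VI. \<exists>sh'. sh' \<subseteq> sh \<and> S = \<Union>sh'}"

definition rel :: "'v set \<Rightarrow> 'v set set \<Rightarrow> 'v set set" where
  "rel V sh = {S \<in> sh. S \<inter> V \<noteq> {}}"

definition amgu1 :: "'v set \<Rightarrow> 'v set set \<Rightarrow> 'v \<times> ('f, 'v) trm \<Rightarrow> 'v set set" where
  "amgu1 VI sh b = (let vx = {fst b}; vt = vars (snd b); vxt = vx \<union> vt in
      (sh - rel vxt sh) \<union> bin (star VI (rel vx sh)) (star VI (rel vt sh)))"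

(* amgu for a substitution, processing its bindings in the order of a list
   enumerating it *)
fun amgu :: "'v set \<Rightarrow> 'v set set \<Rightarrow> ('v \<times> ('f, 'v) trm) list \<Rightarrow> 'v set set" where
  "amgu VI sh [] = sh"
| "amgu VI sh (b # bs) = amgu VI (amgu1 VI sh b) bs"

(* Subst: idempotent substitutions (finite sets of bindings x \<mapsto> t, t \<noteq> x,
   at most one binding per variable), all variables in VI *)
definition is_subst :: "'v set \<Rightarrow> ('v \<times> ('f, 'v) trm) set \<Rightarrow> bool" where
  "is_subst VI \<sigma> \<longleftrightarrow> finite \<sigma>
     \<and> (\<forall>(x, t) \<in> \<sigma>. t \<noteq> Var x \<and> x \<in> VI \<and> vars t \<subseteq> VI)
     \<and> (\<forall>(x, t) \<in> \<sigma>. \<forall>(y, u) \<in> \<sigma>. x = y \<longrightarrow> t = u)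
     \<and> (\<forall>(x, t) \<in> \<sigma>. \<forall>(y, u) \<in> \<sigma>. x \<notin> vars u)"

definition proj :: "'v set \<Rightarrow> 'v set set \<Rightarrow> 'v set \<Rightarrow> 'v set set" where
  "proj VI sh V = {S \<inter> V | S. S \<in> sh \<and> S \<inter> V \<noteq> {}} \<union> {{x} | x. x \<in> VI - V}"

end

theory Submission
  imports Defs
begin

lemma rho_iff:
  "S \<in> rho_TSD VI k sh \<longleftrightarrow> S \<in> SG VI \<and>
     (\<forall>T. T \<subseteq> S \<longrightarrow> card T < k \<longrightarrow> (\<forall>y\<in>S. \<exists>U\<in>sh. T \<subseteq> U \<and> U \<subseteq> S \<and> y \<in> U))"
  unfolding rho_TSD_def by blast

lemma rho_SG: "rho_TSD VI k sh \<subseteq> SG VI"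
  unfolding rho_TSD_def by (rule subsetI) simp

lemma rho_ext: assumes "sh \<subseteq> SG VI" shows "sh \<subseteq> rho_TSD VI k sh"
proof
  fix S assume S: "S \<in> sh"
  have "\<forall>T. T \<subseteq> S \<longrightarrow> card T < k \<longrightarrow> (\<forall>y\<in>S. \<exists>U\<in>sh. T \<subseteq> U \<and> U \<subseteq> S \<and> y \<in> U)"
    using S by blast
  moreover have "S \<in> SG VI" using S assms by blast
  ultimately show "S \<in> rho_TSD VI k sh" unfolding rho_iff by blast
qed

lemma rho_mono: assumes "sh \<subseteq> sh'" shows "rho_TSD VI k sh \<subseteq> rho_TSD VI k sh'"
proof
  fix S assume S: "S \<in> rho_TSD VI k sh"
  have "\<forall>T. T \<subseteq> S \<longrightarrow> card T < k \<longrightarrow> (\<forall>y\<in>S. \<exists>U\<in>sh'. T \<subseteq> U \<and> U \<subseteq> S \<and> y \<in> U)"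
  proof (intro allI impI ballI)
    fix T y assume "T \<subseteq> S" "card T < k" "y \<in> S"
    then obtain U where "U \<in> sh" "T \<subseteq> U" "U \<subseteq> S" "y \<in> U" using S unfolding rho_iff by blast
    then show "\<exists>U\<in>sh'. T \<subseteq> U \<and> U \<subseteq> S \<and> y \<in> U" using assms by blast
  qed
  moreover have "S \<in> SG VI" using S rho_SG by blast
  ultimately show "S \<in> rho_TSD VI k sh'" unfolding rho_iff by blast
qed

lemma rho_idem: "rho_TSD VI k (rho_TSD VI k sh) \<subseteq> rho_TSD VI k sh"
proof
  fix S assume S: "S \<in> rho_TSD VI k (rho_TSD VI k sh)"
  show "S \<in> rho_TSD VI k sh" unfolding rho_iff
  proof (intro conjI allI impI ballI)
    show "S \<in> SG VI" using S rho_SG by blast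
    fix T y assume T: "T \<subseteq> S" "card T < k" and y: "y \<in> S"
    obtain U where U: "U \<in> rho_TSD VI k sh" "T \<subseteq> U" "U \<subseteq> S" "y \<in> U"
      using S T y unfolding rho_iff[of S] by blast
    obtain W where "W \<in> sh" "T \<subseteq> W" "W \<subseteq> U" "y \<in> W"
      using U T unfolding rho_iff[of U] by blast
    then show "\<exists>U\<in>sh. T \<subseteq> U \<and> U \<subseteq> S \<and> y \<in> U" using U by blast
  qed
qed

lemma rho_le: assumes "sh1 \<subseteq> rho_TSD VI k sh2" shows "rho_TSD VI k sh1 \<subseteq> rho_TSD VI k sh2"
  using rho_mono[OF assms] rho_idem by blast

lemma rho_eqI:
  assumes "sh1 \<subseteq> rho_TSD VI k sh2" "sh2 \<subseteq> rho_TSD VI k sh1"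
  shows "rho_TSD VI k sh1 = rho_TSD VI k sh2"
  using rho_le[OF assms(1)] rho_le[OF assms(2)] by blast

lemma union_part:
  assumes "sh1 \<subseteq> rho_TSD VI k sh2" "sh' \<subseteq> SG VI"
  shows "sh' \<union> sh1 \<subseteq> rho_TSD VI k (sh' \<union> sh2)"
proof -
  have "sh' \<subseteq> rho_TSD VI k (sh' \<union> sh2)"
    using rho_ext[OF assms(2)] rho_mono[of sh' "sh' \<union> sh2"] by blast
  moreover have "sh1 \<subseteq> rho_TSD VI k (sh' \<union> sh2)"
    using assms(1) rho_mono[of sh2 "sh' \<union> sh2"] by blast
  ultimately show ?thesis by blast
qed

lemma proj_SG: assumes "V \<subseteq> VI" "sh \<subseteq> SG VI" shows "proj VI sh V \<subseteq> SG VI"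
proof
  fix S assume "S \<in> proj VI sh V"
  then consider (a) S0 where "S = S0 \<inter> V" "S0 \<in> sh" "S0 \<inter> V \<noteq> {}"
    | (b) x where "S = {x}" "x \<in> VI - V" unfolding proj_def by blast
  then show "S \<in> SG VI"
  proof cases
    case a then show ?thesis using assms unfolding SG_def by auto
  next
    case b then show ?thesis unfolding SG_def by auto
  qed
qed

lemma proj_part:
  assumes "sh1 \<subseteq> rho_TSD VI k sh2" "sh2 \<subseteq> SG VI" "V \<subseteq> VI"
  shows "proj VI sh1 V \<subseteq> rho_TSD VI k (proj VI sh2 V)"
proof
  fix S assume "S \<in> proj VI sh1 V"
  then consider (a) S0 where "S = S0 \<inter> V" "S0 \<in> sh1" "S0 \<inter> V \<noteq> {}"
    | (b) x where "S = {x}" "x \<in> VI - V" unfolding proj_def by blast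
  then show "S \<in> rho_TSD VI k (proj VI sh2 V)"
  proof cases
    case a
    have S0: "S0 \<in> rho_TSD VI k sh2" using a(2) assms(1) by (rule subsetD[rotated])
    have "S0 \<in> SG VI" using S0 rho_SG by (rule subsetD[rotated])
    then have SG: "S \<in> SG VI" using a unfolding SG_def by auto
    have "\<forall>T. T \<subseteq> S \<longrightarrow> card T < k \<longrightarrow> (\<forall>y\<in>S. \<exists>U\<in>proj VI sh2 V. T \<subseteq> U \<and> U \<subseteq> S \<and> y \<in> U)"
    proof (intro allI impI ballI)
      fix T y assume T: "T \<subseteq> S" "card T < k" and y: "y \<in> S"
      have TS0: "T \<subseteq> S0" "y \<in> S0" using T(1) y a(1) by auto
      obtain U where U: "U \<in> sh2" "T \<subseteq> U" "U \<subseteq> S0" "y \<in> U"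
        using S0 TS0 T(2) unfolding rho_iff[of S0] by blast
      have yV: "y \<in> V" using y a(1) by auto
      have "U \<inter> V \<in> proj VI sh2 V" using U(1,4) yV unfolding proj_def by blast
      moreover have "T \<subseteq> U \<inter> V" using U(2) T(1) a(1) by auto
      moreover have "U \<inter> V \<subseteq> S" using U(3) a(1) by auto
      moreover have "y \<in> U \<inter> V" using U(4) yV by auto
      ultimately show "\<exists>U\<in>proj VI sh2 V. T \<subseteq> U \<and> U \<subseteq> S \<and> y \<in> U" by blast
    qed
    then show ?thesis using SG unfolding rho_iff by blast
  next
    case b
    then have "S \<in> proj VI sh2 V" unfolding proj_def by blast
    then show ?thesis using rho_ext[OF proj_SG[OF assms(3,2)]] by (rule subsetD[rotated])
  qed
qed

lemma amgu1_eq: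
  "amgu1 VI sh (x, t) = (sh - rel ({x} \<union> vars t) sh) \<union> bin (star VI (rel {x} sh)) (star VI (rel (vars t) sh))"
  unfolding amgu1_def Let_def by simp

lemma star_SG: "star VI sh \<subseteq> SG VI"
  unfolding star_def by (rule subsetI) simp

lemma bin_SG: assumes "A \<subseteq> SG VI" "B \<subseteq> SG VI" shows "bin A B \<subseteq> SG VI"
proof
  fix S assume "S \<in> bin A B"
  then obtain S1 S2 where "S = S1 \<union> S2" "S1 \<in> A" "S2 \<in> B" unfolding bin_def by blast
  then show "S \<in> SG VI" using assms unfolding SG_def by auto
qed

lemma amgu1_SG: assumes "sh \<subseteq> SG VI" shows "amgu1 VI sh b \<subseteq> SG VI"
proof -
  obtain x t where b: "b = (x, t)" by (cases b)
  have "sh - rel ({x} \<union> vars t) sh \<subseteq> SG VI" using assms by auto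
  moreover have "bin (star VI (rel {x} sh)) (star VI (rel (vars t) sh)) \<subseteq> SG VI"
    by (intro bin_SG star_SG)
  ultimately show ?thesis unfolding b amgu1_eq by (rule Un_least)
qed

lemma star_mono: "sh \<subseteq> sh' \<Longrightarrow> star VI sh \<subseteq> star VI sh'"
  unfolding star_def by auto

lemma rel_mono: "sh \<subseteq> sh' \<Longrightarrow> rel V sh \<subseteq> rel V sh'"
  unfolding rel_def by auto

lemma bin_mono: "A \<subseteq> A' \<Longrightarrow> B \<subseteq> B' \<Longrightarrow> bin A B \<subseteq> bin A' B'"
  unfolding bin_def by blast

lemma amgu1_mono: assumes "sh \<subseteq> sh'" shows "amgu1 VI sh b \<subseteq> amgu1 VI sh' b"
proof -
  obtain x t where b: "b = (x, t)" by (cases b)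
  have "sh - rel ({x} \<union> vars t) sh \<subseteq> sh' - rel ({x} \<union> vars t) sh'"
    using assms unfolding rel_def by auto
  moreover have "bin (star VI (rel {x} sh)) (star VI (rel (vars t) sh))
     \<subseteq> bin (star VI (rel {x} sh')) (star VI (rel (vars t) sh'))"
    by (intro bin_mono star_mono rel_mono assms)
  ultimately show ?thesis unfolding b amgu1_eq by (rule Un_mono)
qed

lemma G:
  assumes P: "P \<subseteq> sh" and sh: "sh \<subseteq> SG VI" and cov: "\<forall>U\<in>P. U \<inter> (vx \<union> vt) \<noteq> {}"
    and a: "Ua \<in> P" "Ua \<inter> vx \<noteq> {}" and b: "Ub \<in> P" "Ub \<inter> vt \<noteq> {}"
  shows "\<Union>P \<in> bin (star VI (rel vx sh)) (star VI (rel vt sh))"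
proof -
  have rs: "rel V P \<subseteq> P" for V unfolding rel_def by auto
  have e: "\<Union>P = \<Union>(rel vx P) \<union> \<Union>(rel vt P)"
  proof (rule equalityI)
    show "\<Union>P \<subseteq> \<Union>(rel vx P) \<union> \<Union>(rel vt P)"
    proof
      fix y assume "y \<in> \<Union>P"
      then obtain U where U: "U \<in> P" "y \<in> U" by blast
      then have "U \<inter> (vx \<union> vt) \<noteq> {}" using cov by blast
      then have "U \<in> rel vx P \<or> U \<in> rel vt P" using U(1) unfolding rel_def by auto
      then show "y \<in> \<Union>(rel vx P) \<union> \<Union>(rel vt P)" using U(2) by blast
    qed
    show "\<Union>(rel vx P) \<union> \<Union>(rel vt P) \<subseteq> \<Union>P"
      using Union_mono[OF rs[of vx]] Union_mono[OF rs[of vt]] by (rule Un_least)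
  qed
  have PSG: "P \<subseteq> SG VI" using P sh by (rule order_trans)
  have "Ua \<in> rel vx P" using a unfolding rel_def by simp
  then have ne1: "\<Union>(rel vx P) \<noteq> {}" using a(2) by blast
  have su1: "\<Union>(rel vx P) \<subseteq> VI" using rs[of vx] PSG unfolding SG_def by blast
  have r1: "rel vx P \<subseteq> rel vx sh" using P by (rule rel_mono)
  have n1: "\<Union>(rel vx P) \<in> SG VI" using ne1 su1 unfolding SG_def by simp
  have 1: "\<Union>(rel vx P) \<in> star VI (rel vx sh)" unfolding star_def using n1 r1 by blast
  have "Ub \<in> rel vt P" using b unfolding rel_def by simp
  then have ne2: "\<Union>(rel vt P) \<noteq> {}" using b(2) by blast
  have su2: "\<Union>(rel vt P) \<subseteq> VI" using rs[of vt] PSG unfolding SG_def by blast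
  have r2: "rel vt P \<subseteq> rel vt sh" using P by (rule rel_mono)
  have n2: "\<Union>(rel vt P) \<in> SG VI" using ne2 su2 unfolding SG_def by simp
  have 2: "\<Union>(rel vt P) \<in> star VI (rel vt sh)" unfolding star_def using n2 r2 by blast
  show ?thesis unfolding bin_def e mem_Collect_eq using 1 2 by blast
qed


lemma K:
  assumes sh: "sh \<subseteq> SG VI" and fin: "finite VI" and k: "1 \<le> k"
  shows "amgu1 VI (rho_TSD VI k sh) b \<subseteq> rho_TSD VI k (amgu1 VI sh b)"
proof
  obtain x t where b: "b = (x, t)" by (cases b)
  define vx where "vx = {x}"
  define vt where "vt = vars t"
  have am: "amgu1 VI sh' b = (sh' - rel (vx \<union> vt) sh') \<union> bin (star VI (rel vx sh')) (star VI (rel vt sh'))" for sh'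
    unfolding b vx_def vt_def by (rule amgu1_eq)
  have amSG: "amgu1 VI sh b \<subseteq> SG VI" using sh by (rule amgu1_SG)
  fix S assume S: "S \<in> amgu1 VI (rho_TSD VI k sh) b"
  show "S \<in> rho_TSD VI k (amgu1 VI sh b)"
  proof (cases "S \<in> bin (star VI (rel vx (rho_TSD VI k sh))) (star VI (rel vt (rho_TSD VI k sh)))")
    case False
    then have Sa: "S \<in> rho_TSD VI k sh" "S \<inter> (vx \<union> vt) = {}" using S unfolding am rel_def by auto
    have "\<forall>T. T \<subseteq> S \<longrightarrow> card T < k \<longrightarrow> (\<forall>y\<in>S. \<exists>U\<in>amgu1 VI sh b. T \<subseteq> U \<and> U \<subseteq> S \<and> y \<in> U)"
    proof (intro allI impI ballI)
      fix T y assume "T \<subseteq> S" "card T < k" "y \<in> S"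
      then obtain U where U: "U \<in> sh" "T \<subseteq> U" "U \<subseteq> S" "y \<in> U" using Sa(1) unfolding rho_iff[of S] by blast
      have "U \<inter> (vx \<union> vt) = {}" using U(3) Sa(2) by blast
      then have "U \<in> amgu1 VI sh b" using U(1) unfolding am rel_def by blast
      then show "\<exists>U\<in>amgu1 VI sh b. T \<subseteq> U \<and> U \<subseteq> S \<and> y \<in> U" using U by blast
    qed
    moreover have "S \<in> SG VI" using Sa(1) rho_SG by blast
    ultimately show ?thesis unfolding rho_iff by blast
  next
    case True
    then obtain S1 S2 where S12: "S = S1 \<union> S2" "S1 \<in> star VI (rel vx (rho_TSD VI k sh))"
        "S2 \<in> star VI (rel vt (rho_TSD VI k sh))" unfolding bin_def by blast
    obtain A where A: "A \<subseteq> rel vx (rho_TSD VI k sh)" "S1 = \<Union>A" "S1 \<in> SG VI"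
      using S12(2) unfolding star_def by blast
    obtain B where B: "B \<subseteq> rel vt (rho_TSD VI k sh)" "S2 = \<Union>B" "S2 \<in> SG VI"
      using S12(3) unfolding star_def by blast
    have SSG: "S \<in> SG VI" using A(3) B(3) S12(1) unfolding SG_def by auto
    have Asub: "C \<in> rho_TSD VI k sh \<and> C \<inter> vx \<noteq> {}" if "C \<in> A" for C
      using A(1) that unfolding rel_def by auto
    have Bsub: "C \<in> rho_TSD VI k sh \<and> C \<inter> vt \<noteq> {}" if "C \<in> B" for C
      using B(1) that unfolding rel_def by auto
    have CS: "C \<subseteq> S" if "C \<in> A \<union> B" for C using that A(2) B(2) S12(1) by blast
    have cover: "\<exists>C \<in> A \<union> B. y \<in> C" if "y \<in> S" for y using that A(2) B(2) S12(1) by blast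
    have Crho: "C \<in> rho_TSD VI k sh" if "C \<in> A \<union> B" for C using that Asub Bsub by blast
    have Cz: "\<exists>z\<in>C. z \<in> vx \<union> vt" if "C \<in> A \<union> B" for C using Asub Bsub that by blast
    have e0: "{} \<subseteq> C" "card {} < k" for C :: "'a set" using k by auto
    have "\<exists>U. U \<in> sh \<and> U \<subseteq> S \<and> U \<inter> vx \<noteq> {}"
    proof -
      have "S1 \<noteq> {}" using A(3) unfolding SG_def by auto
      then obtain Ca where Ca: "Ca \<in> A" "Ca \<noteq> {}" using A(2) by auto
      obtain za where za: "za \<in> Ca" "za \<in> vx" using Asub[OF Ca(1)] by blast
      have "Ca \<in> rho_TSD VI k sh" using Asub[OF Ca(1)] by blast
      then obtain U where U: "U \<in> sh" "U \<subseteq> Ca" "za \<in> U"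
        using za(1) e0 unfolding rho_iff[of Ca] by blast
      show ?thesis using U za CS[of Ca] Ca(1) by blast
    qed
    then obtain Ua where Ua: "Ua \<in> sh" "Ua \<subseteq> S" "Ua \<inter> vx \<noteq> {}" by blast
    have "\<exists>U. U \<in> sh \<and> U \<subseteq> S \<and> U \<inter> vt \<noteq> {}"
    proof -
      have "S2 \<noteq> {}" using B(3) unfolding SG_def by auto
      then obtain Cb where Cb: "Cb \<in> B" "Cb \<noteq> {}" using B(2) by auto
      obtain zb where zb: "zb \<in> Cb" "zb \<in> vt" using Bsub[OF Cb(1)] by blast
      have "Cb \<in> rho_TSD VI k sh" using Bsub[OF Cb(1)] by blast
      then obtain U where U: "U \<in> sh" "U \<subseteq> Cb" "zb \<in> U"
        using zb(1) e0 unfolding rho_iff[of Cb] by blast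
      show ?thesis using U zb CS[of Cb] Cb(1) by blast
    qed
    then obtain Ub where Ub: "Ub \<in> sh" "Ub \<subseteq> S" "Ub \<inter> vt \<noteq> {}" by blast
    show ?thesis
    proof (cases "2 \<le> k")
      case True
      define P where "P = {U \<in> sh. U \<subseteq> S \<and> U \<inter> (vx \<union> vt) \<noteq> {}}"
      have PS: "\<Union>P = S"
      proof
        show "\<Union>P \<subseteq> S" unfolding P_def by blast
        show "S \<subseteq> \<Union>P"
        proof
          fix y assume y: "y \<in> S"
          obtain C where C: "C \<in> A \<union> B" "y \<in> C" using cover y by blast
          obtain z where z: "z \<in> C" "z \<in> vx \<union> vt" using Cz C(1) by blast
          have Cr: "C \<in> rho_TSD VI k sh" using C(1) by (rule Crho)
          have "{y} \<subseteq> C" "card {y} < k" using C True by auto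
          then obtain U where U: "U \<in> sh" "{y} \<subseteq> U" "U \<subseteq> C" "z \<in> U"
            using Cr z(1) unfolding rho_iff[of C] by blast
          then have "U \<in> P" using CS[OF C(1)] z(2) unfolding P_def by blast
          then show "y \<in> \<Union>P" using U(2) by blast
        qed
      qed
      have "\<Union>P \<in> bin (star VI (rel vx sh)) (star VI (rel vt sh))"
      proof (rule G[OF _ sh, of P _ _ Ua Ub])
        show "P \<subseteq> sh" unfolding P_def by blast
        show "\<forall>U\<in>P. U \<inter> (vx \<union> vt) \<noteq> {}" unfolding P_def by blast
        show "Ua \<in> P" using Ua unfolding P_def by blast
        show "Ub \<in> P" using Ub unfolding P_def by blast
      qed (use Ua Ub in auto)
      then have "S \<in> amgu1 VI sh b" using PS unfolding am by blast
      then show ?thesis using rho_ext[OF amSG] by blast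
    next
      case False
      then have k1: "k = 1" using k by simp
      have fS: "finite S" using SSG fin unfolding SG_def by (auto intro: finite_subset)
      have "\<forall>T. T \<subseteq> S \<longrightarrow> card T < k \<longrightarrow> (\<forall>y\<in>S. \<exists>W\<in>amgu1 VI sh b. T \<subseteq> W \<and> W \<subseteq> S \<and> y \<in> W)"
      proof (intro allI impI ballI)
        fix T y assume T: "T \<subseteq> S" "card T < k" and y: "y \<in> S"
        have T0: "T = {}" using T k1 finite_subset[OF T(1) fS] by auto
        obtain C where C: "C \<in> A \<union> B" "y \<in> C" using cover y by blast
        have Cr: "C \<in> rho_TSD VI k sh" using C(1) by (rule Crho)
        obtain U where U: "U \<in> sh" "U \<subseteq> C" "y \<in> U"
          using Cr C(2) e0 unfolding rho_iff[of C] by blast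
        have US: "U \<subseteq> S" using U(2) CS[OF C(1)] by blast
        show "\<exists>W\<in>amgu1 VI sh b. T \<subseteq> W \<and> W \<subseteq> S \<and> y \<in> W"
        proof (cases "U \<inter> (vx \<union> vt) = {}")
          case True
          then have "U \<in> amgu1 VI sh b" using U(1) unfolding am rel_def by blast
          then show ?thesis using U(3) US T0 by blast
        next
          case False
          have "\<Union>{U, Ua, Ub} \<in> bin (star VI (rel vx sh)) (star VI (rel vt sh))"
            by (rule G[OF _ sh, of "{U, Ua, Ub}" _ _ Ua Ub]) (use U Ua Ub False in auto)
          then have "\<Union>{U, Ua, Ub} \<in> amgu1 VI sh b" unfolding am by blast
          moreover have "\<Union>{U, Ua, Ub} \<subseteq> S" using US Ua Ub by auto
          moreover have "y \<in> \<Union>{U, Ua, Ub}" using U(3) by auto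
          ultimately show ?thesis using T0 by blast
        qed
      qed
      then show ?thesis using SSG unfolding rho_iff by blast
    qed
  qed
qed

lemma AM:
  assumes "sh1 \<subseteq> SG VI" "sh2 \<subseteq> SG VI" "rho_TSD VI k sh1 = rho_TSD VI k sh2"
    "finite VI" "1 \<le> k"
  shows "rho_TSD VI k (amgu VI sh1 bs) = rho_TSD VI k (amgu VI sh2 bs)"
  using assms(1-3)
proof (induction bs arbitrary: sh1 sh2)
  case Nil
  then show ?case by simp
next
  case (Cons b bs)
  have i1: "sh1 \<subseteq> rho_TSD VI k sh2" using rho_ext[OF Cons.prems(1), of k] Cons.prems(3) by simp
  have i2: "sh2 \<subseteq> rho_TSD VI k sh1" using rho_ext[OF Cons.prems(2), of k] Cons.prems(3) by simp
  have "amgu1 VI sh1 b \<subseteq> rho_TSD VI k (amgu1 VI sh2 b)"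
    using amgu1_mono[OF i1, of VI b] K[OF Cons.prems(2) assms(4,5), of b] by (rule order_trans)
  moreover have "amgu1 VI sh2 b \<subseteq> rho_TSD VI k (amgu1 VI sh1 b)"
    using amgu1_mono[OF i2, of VI b] K[OF Cons.prems(1) assms(4,5), of b] by (rule order_trans)
  ultimately have "rho_TSD VI k (amgu1 VI sh1 b) = rho_TSD VI k (amgu1 VI sh2 b)"
    by (rule rho_eqI)
  then show ?case using Cons.IH[OF amgu1_SG[OF Cons.prems(1)] amgu1_SG[OF Cons.prems(2)]] by simp
qed

theorem theorem3p16:
  fixes VI :: "'v set" and n k :: nat
    and sh1 sh2 :: "'v set set"
  assumes "finite VI" and "card VI = n"
    and "sh1 \<in> SH VI" and "sh2 \<in> SH VI"
    and "1 \<le> k" and "k \<le> n"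
    and "rho_TSD VI k sh1 = rho_TSD VI k sh2"
  shows "(\<forall>(bs :: ('v \<times> ('f, 'v) trm) list). distinct bs \<and> is_subst VI (set bs) \<longrightarrow>
            rho_TSD VI k (amgu VI sh1 bs) = rho_TSD VI k (amgu VI sh2 bs))
       \<and> (\<forall>sh' \<in> SH VI. rho_TSD VI k (sh' \<union> sh1) = rho_TSD VI k (sh' \<union> sh2))
       \<and> (\<forall>V \<in> Pow VI. rho_TSD VI k (proj VI sh1 V) = rho_TSD VI k (proj VI sh2 V))"
proof -
  have s1: "sh1 \<subseteq> SG VI" using assms(3) unfolding SH_def by simp
  have s2: "sh2 \<subseteq> SG VI" using assms(4) unfolding SH_def by simp
  have i1: "sh1 \<subseteq> rho_TSD VI k sh2" using rho_ext[OF s1, of k] assms(7) by simp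
  have i2: "sh2 \<subseteq> rho_TSD VI k sh1" using rho_ext[OF s2, of k] assms(7) by simp
  have P1: "\<forall>(bs :: ('v \<times> ('f, 'v) trm) list). distinct bs \<and> is_subst VI (set bs) \<longrightarrow>
            rho_TSD VI k (amgu VI sh1 bs) = rho_TSD VI k (amgu VI sh2 bs)"
    using AM[OF s1 s2 assms(7,1,5)] by blast
  have P2: "\<forall>sh' \<in> SH VI. rho_TSD VI k (sh' \<union> sh1) = rho_TSD VI k (sh' \<union> sh2)"
  proof
    fix sh' assume "sh' \<in> SH VI"
    then have s': "sh' \<subseteq> SG VI" unfolding SH_def by simp
    show "rho_TSD VI k (sh' \<union> sh1) = rho_TSD VI k (sh' \<union> sh2)"
      by (rule rho_eqI[OF union_part[OF i1 s'] union_part[OF i2 s']])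
  qed
  have P3: "\<forall>V \<in> Pow VI. rho_TSD VI k (proj VI sh1 V) = rho_TSD VI k (proj VI sh2 V)"
  proof
    fix V assume "V \<in> Pow VI"
    then have V: "V \<subseteq> VI" by simp
    show "rho_TSD VI k (proj VI sh1 V) = rho_TSD VI k (proj VI sh2 V)"
      by (rule rho_eqI[OF proj_part[OF i1 s2 V] proj_part[OF i2 s1 V]])
  qed
  show ?thesis using P1 P2 P3 by blast
qed

end
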